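(* Let $K$ be a field of characteristic zero and $m\ge1$. The tropical valuation $\operatorname{trop}:K(\!(\mathbf{t})\!)\to V\mathbb{B}(\mathbf{t})$ is a surjective $K$-algebra B\'ezout valuation; in particular, for all $a,b\in K(\!(\mathbf{t})\!)$ there exist $x,y\in K(\!(\mathbf{t})\!)^\circ$ with $\operatorname{trop}(xa+yb)=\operatorname{trop}(a)\oplus\operatorname{trop}(b)$.
   Context: $\mathbf{t}=(t_1,\dots,t_m)$, $K(\!(\mathbf{t})\!)=\operatorname{Frac}K[\![\mathbf{t}]\!]$. For $A\subseteq\mathbb{N}^m$ the Newton polyhedron is $\operatorname{conv}(A)+\mathbb{R}^m_{\ge0}$. $V\mathbb{B}[\mathbf{t}]$ is the idempotent semiring of subsets of $\mathbb{N}^m$ equal to the vertex set of their Newton polyhedron, with $a\oplus b$ = vertex set of the Newton polyhedron of $a\cup b$ and $a\odot b$ = vertex set of that of the Minkowski sum $a+b$ ($0=\emptyset$, $1=\{0\}$). $V\mathbb{B}(\mathbf{t})$ is its fraction semifield, with $\frac ab\oplus\frac cd=\frac{a\odot d\oplus b\odot c}{b\odot d}$, $\frac ab\odot\frac cd=\frac{a\odot c}{b\odot d}$, ordered by $x\le y$ iff $x\oplus y=y$. $\operatorname{trop}(f)$ for $f\in K[\![\mathbf{t}]\!]$ is the vertex set of the Newton polyhedron of $\operatorname{Supp}(f)$, and $\operatorname{trop}(f/g)=\operatorname{trop}(f)/\operatorname{trop}(g)$; this is known to be a surjective valuation (multiplicative, $\operatorname{trop}(a+b)\le\operatorname{trop}(a)\oplus\operatorname{trop}(b)$,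 zero only at $0$). $K(\!(\mathbf{t})\!)^\circ=\{q:\operatorname{trop}(q)\le1\}$. A B\'ezout valuation $v$ on a field $R$ is one such that for all $a,b$ there are $x,y\in R^\circ$ with $v(xa+yb)=v(a)+v(b)$; "$K$-algebra" means $\operatorname{trop}(c)=1$ for nonzero constants $c\in K$. *)

theory Defs
  imports "HOL-Analysis.Analysis"
begin

text \<open>The variables t_1..t_m are indexed by a finite type 'm (so m = CARD('m) \<ge> 1).\<close>

type_synonym 'm expo = "'m \<Rightarrow> nat"
type_synonym ('a, 'm) mps = "'m expo \<Rightarrow> 'a"

definition expo_zero :: "'m expo" where
  "expo_zero = (\<lambda>_. 0)"

definition expo_add :: "'m expo \<Rightarrow> 'm expo \<Rightarrow> 'm expo" where
  "expo_add u v = (\<lambda>i. u i + v i)"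

definition mps_add :: "('a::field, 'm) mps \<Rightarrow> ('a, 'm) mps \<Rightarrow> ('a, 'm) mps" where
  "mps_add f g = (\<lambda>e. f e + g e)"

definition mps_mult :: "('a::field, 'm::finite) mps \<Rightarrow> ('a, 'm) mps \<Rightarrow> ('a, 'm) mps" where
  "mps_mult f g = (\<lambda>e. \<Sum>p\<in>{p. \<forall>i. p i \<le> e i}. f p * g (\<lambda>i. e i - p i))"

definition mps_const :: "'a::field \<Rightarrow> ('a, 'm) mps" where
  "mps_const c = (\<lambda>e. if e = expo_zero then c else 0)"

definition mps_one :: "('a::field, 'm) mps" where
  "mps_one = mps_const 1"

definition supp :: "('a::field, 'm) mps \<Rightarrow> 'm expo set" where
  "supp f = {e. f e \<noteq> 0}"

section \<open>K((t)) = Frac K[[t]], represented by pairs (numerator, nonzero denominator)\<close>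

definition Kfrac :: "(('a::field, 'm) mps \<times> ('a, 'm) mps) set" where
  "Kfrac = {(f, g). g \<noteq> (\<lambda>_. 0)}"

definition fr_add :: "('a::field, 'm::finite) mps \<times> ('a, 'm) mps \<Rightarrow> ('a, 'm) mps \<times> ('a, 'm) mps
    \<Rightarrow> ('a, 'm) mps \<times> ('a, 'm) mps" where
  "fr_add p q = (mps_add (mps_mult (fst p) (snd q)) (mps_mult (fst q) (snd p)),
                 mps_mult (snd p) (snd q))"

definition fr_mult :: "('a::field, 'm::finite) mps \<times> ('a, 'm) mps \<Rightarrow> ('a, 'm) mps \<times> ('a, 'm) mps
    \<Rightarrow> ('a, 'm) mps \<times> ('a, 'm) mps" where
  "fr_mult p q = (mps_mult (fst p) (fst q), mps_mult (snd p) (snd q))"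

definition emb :: "'m::finite expo \<Rightarrow> real ^ 'm" where
  "emb v = (\<chi> i. real (v i))"

definition orthant :: "(real ^ 'm::finite) set" where
  "orthant = {x. \<forall>i. 0 \<le> x $ i}"

definition newton :: "'m::finite expo set \<Rightarrow> (real ^ 'm) set" where
  "newton A = {x + y | x y. x \<in> convex hull (emb ` A) \<and> y \<in> orthant}"

definition vert :: "'m::finite expo set \<Rightarrow> 'm expo set" where
  "vert A = {v. emb v extreme_point_of newton A}"

definition VBt :: "'m::finite expo set set" where
  "VBt = {a. vert a = a}"

definition vb_add :: "'m::finite expo set \<Rightarrow> 'm expo set \<Rightarrow> 'm expo set" where
  "vb_add a b = vert (a \<union> b)"

definition vb_mult :: "'m::finite expo set \<Rightarrow> 'm expo set \<Rightarrow> 'm expo set" where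
  "vb_mult a b = vert {expo_add x y | x y. x \<in> a \<and> y \<in> b}"

section \<open>The fraction semifield VB(t), represented by pairs (a, b) with b \<noteq> 0\<close>

definition VBfrac :: "('m::finite expo set \<times> 'm expo set) set" where
  "VBfrac = {(a, b). a \<in> VBt \<and> b \<in> VBt \<and> b \<noteq> {}}"

text \<open>Equality of fractions a/b = c/d (VB[t] is cancellative, so cross multiplication).\<close>
definition vf_eq :: "'m::finite expo set \<times> 'm expo set \<Rightarrow> 'm expo set \<times> 'm expo set \<Rightarrow> bool" where
  "vf_eq p q \<longleftrightarrow> vb_mult (fst p) (snd q) = vb_mult (snd p) (fst q)"

definition vf_add :: "'m::finite expo set \<times> 'm expo set \<Rightarrow> 'm expo set \<times> 'm expo set
    \<Rightarrow> 'm expo set \<times> 'm expo set" where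
  "vf_add p q = (vb_add (vb_mult (fst p) (snd q)) (vb_mult (snd p) (fst q)),
                 vb_mult (snd p) (snd q))"

definition vf_mult :: "'m::finite expo set \<times> 'm expo set \<Rightarrow> 'm expo set \<times> 'm expo set
    \<Rightarrow> 'm expo set \<times> 'm expo set" where
  "vf_mult p q = (vb_mult (fst p) (fst q), vb_mult (snd p) (snd q))"

definition vf_zero :: "'m::finite expo set \<times> 'm expo set" where
  "vf_zero = ({}, {expo_zero})"

definition vf_one :: "'m::finite expo set \<times> 'm expo set" where
  "vf_one = ({expo_zero}, {expo_zero})"

definition vf_le :: "'m::finite expo set \<times> 'm expo set \<Rightarrow> 'm expo set \<times> 'm expo set \<Rightarrow> bool" where
  "vf_le x y \<longleftrightarrow> vf_eq (vf_add x y) y"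

definition trop_series :: "('a::field, 'm::finite) mps \<Rightarrow> 'm expo set" where
  "trop_series f = vert (supp f)"

definition trop :: "('a::field, 'm::finite) mps \<times> ('a, 'm) mps \<Rightarrow> 'm expo set \<times> 'm expo set" where
  "trop q = (trop_series (fst q), trop_series (snd q))"

end

theory Submission
  imports Defs
begin


lemma emb_add: "emb (expo_add u v) = emb u + emb v"
  by (simp add: emb_def expo_add_def vec_eq_iff)

lemma emb_inj: "inj emb"
  by (auto simp: inj_def emb_def vec_eq_iff)

lemma emb_eq_iff[simp]: "emb u = emb v \<longleftrightarrow> u = v"
  using emb_inj by (auto dest: injD)

lemma orthant_add: "x \<in> orthant \<Longrightarrow> y \<in> orthant \<Longrightarrow> x + y \<in> orthant"
  by (simp add: orthant_def)

lemma orthant_zero[simp]: "0 \<in> orthant"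
  by (simp add: orthant_def)

lemma convex_orthant: "convex orthant"
  by (auto simp: orthant_def convex_def)

lemma newton_alt: "newton A = convex hull (emb ` A) + orthant"
  by (auto simp: newton_def set_plus_def)

lemma convex_newton: "convex (newton A)"
  unfolding newton_alt by (intro convex_set_plus convex_convex_hull convex_orthant)

lemma newton_plus_orthant: "x \<in> newton A \<Longrightarrow> w \<in> orthant \<Longrightarrow> x + w \<in> newton A"
  unfolding newton_def by (force simp: add.assoc intro: orthant_add)

lemma emb_in_newton: "a \<in> A \<Longrightarrow> emb a \<in> newton A"
  unfolding newton_def by (force intro: hull_inc)

lemma newton_least:
  assumes "convex N" "\<And>x w. x \<in> N \<Longrightarrow> w \<in> orthant \<Longrightarrow> x + w \<in> N" "emb ` B \<subseteq> N"
  shows "newton B \<subseteq> N"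
proof
  fix z assume "z \<in> newton B"
  then obtain x w where z: "z = x + w" "x \<in> convex hull (emb ` B)" "w \<in> orthant"
    by (auto simp: newton_def)
  have "convex hull (emb ` B) \<subseteq> N" using assms by (simp add: hull_minimal)
  then show "z \<in> N" using z assms(2) by auto
qed

lemma newton_mono: "A \<subseteq> B \<Longrightarrow> newton A \<subseteq> newton B"
  by (intro newton_least convex_newton newton_plus_orthant) (auto intro: emb_in_newton)

lemma newton_empty[simp]: "newton {} = {}"
  by (simp add: newton_def)

lemma newton_subI: "(\<And>a. a \<in> A \<Longrightarrow> emb a \<in> newton B) \<Longrightarrow> newton A \<subseteq> newton B"
  by (intro newton_least convex_newton newton_plus_orthant) auto

lemma extreme_mid:
  assumes "x extreme_point_of S" "y \<in> S" "z \<in> S" "x = (1/2) *\<^sub>R (y + z)"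
  shows "y = z"
  using assms midpoint_in_open_segment[of y z] unfolding extreme_point_of_def midpoint_def
  by auto

lemma orthant_nonzero_mid:
  assumes "x \<in> newton A" "w \<in> orthant" "w \<noteq> 0"
  shows "\<not> (x + w) extreme_point_of newton A"
proof
  assume e: "(x + w) extreme_point_of newton A"
  have "x + 2 *\<^sub>R w \<in> newton A" using assms
    by (intro newton_plus_orthant) (auto simp: orthant_def)
  moreover have "x + w = (1/2) *\<^sub>R (x + (x + 2 *\<^sub>R w))"
    by (simp add: vec_eq_iff field_simps)
  ultimately have "x = x + 2 *\<^sub>R w" using extreme_mid[OF e assms(1)] by blast
  then show False using assms(3) by simp
qed

lemma vert_subset: "vert A \<subseteq> A"
proof
  fix v assume "v \<in> vert A"
  then have e: "emb v extreme_point_of newton A" by (simp add: vert_def)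
  then have "emb v \<in> newton A" by (simp add: extreme_point_of_def)
  then obtain x w where xo: "emb v = x + w" "x \<in> convex hull (emb ` A)" "w \<in> orthant"
    by (auto simp: newton_def)
  have xn: "x \<in> newton A" using xo newton_plus_orthant[of x A 0]
    by (force simp: newton_def)
  have "w = 0" using orthant_nonzero_mid[OF xn xo(3)] e xo(1) by auto
  then have "emb v \<in> convex hull (emb ` A)" using xo by simp
  moreover have "convex hull (emb ` A) \<subseteq> newton A"
    using newton_plus_orthant[of _ A 0] by (force simp: newton_def)
  ultimately have "emb v extreme_point_of convex hull (emb ` A)"
    using e by (auto simp: extreme_point_of_def)
  then have "emb v \<in> emb ` A" by (rule extreme_point_of_convex_hull)
  then show "v \<in> A" by auto
qed

lemma vert_cong: "newton A = newton B \<Longrightarrow> vert A = vert B"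
  by (simp add: vert_def)



lemma newton_decomp:
  assumes "y \<in> newton A" "a \<in> A"
  shows "\<exists>t c w. 0 \<le> t \<and> t \<le> 1 \<and> (t < 1 \<longrightarrow> c \<in> convex hull (emb ` (A - {a})))
            \<and> w \<in> orthant \<and> y = t *\<^sub>R emb a + (1 - t) *\<^sub>R c + w"
proof -
  obtain x w where xw: "y = x + w" "x \<in> convex hull (emb ` A)" "w \<in> orthant"
    using assms(1) by (auto simp: newton_def)
  have A: "emb ` A = insert (emb a) (emb ` (A - {a}))" using assms(2) by auto
  show ?thesis
  proof (cases "A - {a} = {}")
    case True
    then have E: "emb ` (A - {a}) = {}" by simp
    have "x \<in> convex hull {emb a}" using xw(2) unfolding A E .
    then have "x = emb a" by simp
    then show ?thesis using xw by (intro exI[of _ 1] exI[of _ 0] exI[of _ w]) auto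
  next
    case False
    then obtain u c where uc: "x = (1 - u) *\<^sub>R emb a + u *\<^sub>R c" "0 \<le> u" "u \<le> 1"
        "c \<in> convex hull (emb ` (A - {a}))"
      using xw(2) unfolding A convex_hull_insert_alt by auto
    show ?thesis using xw uc
      by (intro exI[of _ "1 - u"] exI[of _ c] exI[of _ w]) auto
  qed
qed

lemma nonvert_in_newton:
  assumes "a \<in> A" "a \<notin> vert A"
  shows "emb a \<in> newton (A - {a})"
proof -
  let ?e = "emb a"
  have ea: "?e \<in> newton A" using assms(1) by (rule emb_in_newton)
  then obtain y z where yz: "y \<in> newton A" "z \<in> newton A" "?e \<in> open_segment y z"
    using assms(2) by (auto simp: vert_def extreme_point_of_def)
  then obtain u where u: "y \<noteq> z" "0 < u" "u < 1" "?e = (1 - u) *\<^sub>R y + u *\<^sub>R z"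
    by (auto simp: in_segment)
  obtain t1 c1 w1 where d1: "0 \<le> t1" "t1 \<le> 1" "t1 < 1 \<longrightarrow> c1 \<in> convex hull (emb ` (A - {a}))"
     "w1 \<in> orthant" "y = t1 *\<^sub>R ?e + (1 - t1) *\<^sub>R c1 + w1"
    using newton_decomp[OF yz(1) assms(1)] by blast
  obtain t2 c2 w2 where d2: "0 \<le> t2" "t2 \<le> 1" "t2 < 1 \<longrightarrow> c2 \<in> convex hull (emb ` (A - {a}))"
     "w2 \<in> orthant" "z = t2 *\<^sub>R ?e + (1 - t2) *\<^sub>R c2 + w2"
    using newton_decomp[OF yz(2) assms(1)] by blast
  have comp: "\<And>i. ?e $ i = (1 - u) * (t1 * ?e $ i + (1 - t1) * c1 $ i + w1 $ i)
                    + u * (t2 * ?e $ i + (1 - t2) * c2 $ i + w2 $ i)"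
  proof -
    fix i
    have "?e $ i = ((1 - u) *\<^sub>R y + u *\<^sub>R z) $ i" by (subst u(4)[symmetric]) (rule refl)
    also have "\<dots> = (1 - u) * (t1 * ?e $ i + (1 - t1) * c1 $ i + w1 $ i)
                    + u * (t2 * ?e $ i + (1 - t2) * c2 $ i + w2 $ i)"
      by (simp add: d1(5) d2(5))
    finally show "?e $ i = (1 - u) * (t1 * ?e $ i + (1 - t1) * c1 $ i + w1 $ i)
                    + u * (t2 * ?e $ i + (1 - t2) * c2 $ i + w2 $ i)" .
  qed
  show ?thesis
  proof (cases "t1 = 1 \<and> t2 = 1")
    case True
    have "\<And>i. (1 - u) * w1 $ i + u * w2 $ i = 0" using comp True by (simp add: algebra_simps)
    moreover have "\<And>i. 0 \<le> w1 $ i" "\<And>i. 0 \<le> w2 $ i" using d1(4) d2(4) by (auto simp: orthant_def)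
    ultimately have "\<And>i. w1 $ i = 0 \<and> w2 $ i = 0" using u(2,3)
      by (smt (verit) mult_nonneg_nonneg mult_pos_pos)
    then have "y = z" using True d1(5) d2(5) by (simp add: vec_eq_iff)
    then show ?thesis using u(1) by simp
  next
    case False
    define l where "l = (1 - u) * t1 + u * t2"
    define al where "al = (1 - u) * (1 - t1)"
    define be where "be = u * (1 - t2)"
    have l1: "l < 1"
    proof (cases "t1 < 1")
      case True
      have "(1 - u) * t1 < (1 - u) * 1" using True u(2,3) by (intro mult_strict_left_mono) auto
      moreover have "u * t2 \<le> u * 1" using d2(1,2) u(2,3) by (intro mult_left_mono) auto
      ultimately show ?thesis unfolding l_def by simp
    next
      case f: False
      then have "t2 < 1" using False d1(2) d2(2) by auto
      then have "u * t2 < u * 1" using u(2,3) by (intro mult_strict_left_mono) auto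
      moreover have "(1 - u) * t1 \<le> (1 - u) * 1" using d1(1,2) u(2,3) by (intro mult_left_mono) auto
      ultimately show ?thesis unfolding l_def by simp
    qed
    have alge: "0 \<le> al" "0 \<le> be" using d1(1,2) d2(1,2) u(2,3) unfolding al_def be_def by auto
    have sum: "al + be = 1 - l" unfolding al_def be_def l_def by (simp add: algebra_simps)
    define c where "c = (al / (1 - l)) *\<^sub>R c1 + (be / (1 - l)) *\<^sub>R c2"
    have c: "c \<in> convex hull (emb ` (A - {a}))"
    proof (cases "t1 = 1")
      case True
      then have "t2 < 1" using False d2(1,2) by auto
      then show ?thesis using True d2(3) sum l1 unfolding c_def al_def by auto
    next
      case f1: False
      show ?thesis
      proof (cases "t2 = 1")
        case True
        then show ?thesis using f1 d1(1,2,3) sum l1 unfolding c_def be_def by auto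
      next
        case False
        then show ?thesis using f1 d1(1,2,3) d2(1,2,3) sum l1 alge unfolding c_def
          by (intro convexD[OF convex_convex_hull]) (auto simp: add_divide_distrib[symmetric])
      qed
    qed
    define W where "W = (1 / (1 - l)) *\<^sub>R ((1 - u) *\<^sub>R w1 + u *\<^sub>R w2)"
    have W: "W \<in> orthant" using d1(4) d2(4) u(2,3) l1 unfolding W_def orthant_def by auto
    have "?e = c + W"
    proof (subst vec_eq_iff, intro allI)
      fix i
      have "?e $ i = l * ?e $ i + al * c1 $ i + be * c2 $ i + ((1 - u) * w1 $ i + u * w2 $ i)"
        using comp[of i] unfolding l_def al_def be_def by (simp add: algebra_simps)
      then have "(1 - l) * ?e $ i = al * c1 $ i + be * c2 $ i + ((1 - u) * w1 $ i + u * w2 $ i)"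
        by (simp add: algebra_simps)
      then have "?e $ i = (al * c1 $ i + be * c2 $ i + ((1 - u) * w1 $ i + u * w2 $ i)) / (1 - l)"
        using l1 by (simp add: eq_divide_eq mult.commute)
      moreover have "(c + W) $ i = (al * c1 $ i + be * c2 $ i + ((1 - u) * w1 $ i + u * w2 $ i)) / (1 - l)"
        using l1 unfolding c_def W_def by (simp add: add_divide_distrib)
      ultimately show "?e $ i = (c + W) $ i" by simp
    qed
    then show ?thesis using c W unfolding newton_def by blast
  qed
qed



lemma newton_remove:
  assumes "a \<in> A" "a \<notin> vert A"
  shows "newton A = newton (A - {a})"
proof
  show "newton A \<subseteq> newton (A - {a})"
    using nonvert_in_newton[OF assms] by (intro newton_subI) (auto intro: emb_in_newton)
  show "newton (A - {a}) \<subseteq> newton A" by (rule newton_mono) auto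
qed

lemma newton_vert_finite: "finite A \<Longrightarrow> newton (vert A) = newton A"
proof (induction "card A" arbitrary: A rule: less_induct)
  case less
  show ?case
  proof (cases "vert A = A")
    case True then show ?thesis by simp
  next
    case False
    then obtain a where a: "a \<in> A" "a \<notin> vert A" using vert_subset by blast
    have n: "newton A = newton (A - {a})" by (rule newton_remove[OF a])
    then have "vert A = vert (A - {a})" by (rule vert_cong)
    moreover have "card (A - {a}) < card A" using less.prems a(1) by (rule card_Diff1_less)
    ultimately show ?thesis using less n by simp
  qed
qed

definition mins :: "'m expo set \<Rightarrow> 'm expo set" where
  "mins A = {a \<in> A. \<forall>b \<in> A. b \<le> a \<longrightarrow> b = a}"

lemma antichain_finite_aux:
  "\<forall>J M. finite J \<and> card J = n \<and> (\<forall>m\<in>M. \<forall>m'\<in>M. (\<forall>i\<in>J. (m i::nat) \<le> m' i) \<longrightarrow> m = m')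
     \<longrightarrow> finite (M :: ('m \<Rightarrow> nat) set)"
proof (induction n)
  case 0
  show ?case
  proof (intro allI impI)
    fix J and M :: "('m \<Rightarrow> nat) set"
    assume h: "finite J \<and> card J = 0 \<and> (\<forall>m\<in>M. \<forall>m'\<in>M. (\<forall>i\<in>J. m i \<le> m' i) \<longrightarrow> m = m')"
    then have "J = {}" by auto
    then have "\<forall>m\<in>M. \<forall>m'\<in>M. m = m'" using h by auto
    then have "M = {} \<or> (\<exists>m. M = {m})" by blast
    then show "finite M" by auto
  qed
next
  case (Suc n)
  show ?case
  proof (intro allI impI)
    fix J and M :: "('m \<Rightarrow> nat) set"
    assume h: "finite J \<and> card J = Suc n \<and> (\<forall>m\<in>M. \<forall>m'\<in>M. (\<forall>i\<in>J. m i \<le> m' i) \<longrightarrow> m = m')"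
    show "finite M"
    proof (cases "M = {}")
      case True then show ?thesis by simp
    next
      case False
      then obtain m0 where m0: "m0 \<in> M" by blast
      have sub: "M \<subseteq> insert m0 (\<Union>j\<in>J. \<Union>k\<in>{..<m0 j}. {m\<in>M. m j = k})"
      proof
        fix m assume m: "m \<in> M"
        show "m \<in> insert m0 (\<Union>j\<in>J. \<Union>k\<in>{..<m0 j}. {m\<in>M. m j = k})"
        proof (cases "m = m0")
          case True then show ?thesis by simp
        next
          case False
          have hq: "\<forall>m\<in>M. \<forall>m'\<in>M. (\<forall>i\<in>J. m i \<le> m' i) \<longrightarrow> m = m'" using h by blast
          have "\<not> (\<forall>i\<in>J. m0 i \<le> m i)"
          proof
            assume "\<forall>i\<in>J. m0 i \<le> m i"
            then have "m0 = m" using hq m m0 by blast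
            then show False using False by simp
          qed
          then obtain j where "j \<in> J" "m j < m0 j" by force
          then show ?thesis using m by auto
        qed
      qed
      have "finite {m\<in>M. m j = k}" if j: "j \<in> J" for j k
      proof -
        have "finite (J - {j}) \<and> card (J - {j}) = n \<and>
          (\<forall>m\<in>{m\<in>M. m j = k}. \<forall>m'\<in>{m\<in>M. m j = k}. (\<forall>i\<in>J - {j}. m i \<le> m' i) \<longrightarrow> m = m')"
        proof (intro conjI ballI impI)
          show "finite (J - {j})" using h by simp
          show "card (J - {j}) = n" using h j by simp
        next
          fix m m' assume mm: "m \<in> {m\<in>M. m j = k}" "m' \<in> {m\<in>M. m j = k}"
            "\<forall>i\<in>J - {j}. m i \<le> m' i"
          then have "\<forall>i\<in>J. m i \<le> m' i" by (metis (mono_tags) DiffI mem_Collect_eq order_refl singletonD)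
          moreover have hq: "\<forall>m\<in>M. \<forall>m'\<in>M. (\<forall>i\<in>J. m i \<le> m' i) \<longrightarrow> m = m'" using h by blast
          ultimately show "m = m'" using mm(1,2) by blast
        qed
        then show ?thesis using Suc.IH by blast
      qed
      then have "finite (insert m0 (\<Union>j\<in>J. \<Union>k\<in>{..<m0 j}. {m\<in>M. m j = k}))"
        using h by (intro finite_insert[THEN iffD2] finite_UN_I) auto
      then show ?thesis using sub finite_subset by blast
    qed
  qed
qed

lemma mins_finite: "finite (mins (A :: ('m::finite) expo set))"
proof -
  have "\<forall>m\<in>mins A. \<forall>m'\<in>mins A. (\<forall>i\<in>UNIV. m i \<le> m' i) \<longrightarrow> m = m'"
    by (auto simp: mins_def le_fun_def)
  moreover have "finite (UNIV :: 'm set)" by simp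
  ultimately show ?thesis using antichain_finite_aux[of "card (UNIV :: 'm set)", rule_format, of UNIV "mins A"]
    by simp
qed

lemma mins_below:
  fixes A :: "('m::finite) expo set"
  assumes "a \<in> A"
  shows "\<exists>m \<in> mins A. m \<le> a"
proof -
  define S where "S = {b \<in> A. b \<le> a}"
  have "a \<in> S" using assms by (simp add: S_def)
  then obtain b where b: "b \<in> S" "\<And>b'. b' \<in> S \<Longrightarrow> sum b UNIV \<le> sum b' UNIV"
    using ex_has_least_nat[of "\<lambda>b. b \<in> S" a "\<lambda>b. sum b UNIV"] by blast
  have "b \<in> mins A"
  proof -
    have "b' = b" if "b' \<in> A" "b' \<le> b" for b'
    proof (rule ccontr)
      assume ne: "b' \<noteq> b"
      have "b' \<in> S" using that b(1) by (auto simp: S_def)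
      then have "sum b UNIV \<le> sum b' UNIV" by (rule b(2))
      moreover have "sum b' UNIV < sum b UNIV"
      proof -
        obtain i where "b' i \<noteq> b i" using ne by auto
        then have "b' i < b i" using that(2) by (simp add: le_fun_def le_neq_implies_less)
        then show ?thesis using that(2) by (intro sum_strict_mono_ex1) (auto simp: le_fun_def)
      qed
      ultimately show False by simp
    qed
    then show ?thesis using b(1) by (auto simp: mins_def S_def)
  qed
  then show ?thesis using b(1) by (auto simp: S_def)
qed

lemma emb_le_orthant: "m \<le> a \<Longrightarrow> emb a - emb m \<in> orthant"
  by (auto simp: orthant_def emb_def le_fun_def)

lemma newton_mins: "newton (mins A) = newton A"
proof
  show "newton (mins A) \<subseteq> newton A" by (rule newton_mono) (auto simp: mins_def)
  show "newton A \<subseteq> newton (mins A)"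
  proof (rule newton_subI)
    fix a assume "a \<in> A"
    then obtain m where m: "m \<in> mins A" "m \<le> a" using mins_below by blast
    have "emb m + (emb a - emb m) \<in> newton (mins A)"
      using m by (intro newton_plus_orthant emb_in_newton emb_le_orthant)
    then show "emb a \<in> newton (mins A)" by simp
  qed
qed

lemma newton_vert: "newton (vert A) = newton A"
proof -
  have "vert A = vert (mins A)" by (rule vert_cong) (simp add: newton_mins)
  then show ?thesis using newton_vert_finite[OF mins_finite, of A] newton_mins[of A] by simp
qed

lemma vert_vert: "vert (vert A) = vert A"
  by (rule vert_cong) (rule newton_vert)

lemma vert_eq_iff: "vert A = vert B \<longleftrightarrow> newton A = newton B"
proof
  assume "vert A = vert B"
  then have "newton (vert A) = newton (vert B)" by simp
  then show "newton A = newton B" by (simp add: newton_vert)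
qed (rule vert_cong)

lemma vert_ne: "A \<noteq> {} \<Longrightarrow> vert A \<noteq> {}"
proof
  assume "A \<noteq> {}" "vert A = {}"
  then obtain a where "a \<in> A" by blast
  then have "emb a \<in> newton A" by (rule emb_in_newton)
  then have "emb a \<in> newton (vert A)" by (simp add: newton_vert)
  then show False using \<open>vert A = {}\<close> by simp
qed

lemma vert_empty[simp]: "vert {} = {}"
  using vert_subset by blast

lemma vert_sub_mins: "vert A \<subseteq> mins A"
proof
  fix v assume v: "v \<in> vert A"
  then have vA: "v \<in> A" using vert_subset by blast
  have "b = v" if "b \<in> A" "b \<le> v" for b
  proof (rule ccontr)
    assume "b \<noteq> v"
    then have ne: "emb v - emb b \<noteq> 0" by simp
    have "\<not> (emb b + (emb v - emb b)) extreme_point_of newton A"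
      using that by (intro orthant_nonzero_mid emb_in_newton emb_le_orthant ne)
    then show False using v by (simp add: vert_def)
  qed
  then show "v \<in> mins A" using vA by (simp add: mins_def)
qed

lemma vert_finite: "finite (vert A)"
  using vert_sub_mins mins_finite finite_subset by blast

lemma vert_single[simp]: "vert {a} = {a}"
  using vert_ne[of "{a}"] vert_subset[of "{a}"] by blast



definition msum :: "'m expo set \<Rightarrow> 'm expo set \<Rightarrow> 'm expo set" where
  "msum A B = {expo_add x y | x y. x \<in> A \<and> y \<in> B}"

lemma vb_mult_msum: "vb_mult a b = vert (msum a b)"
  by (simp add: vb_mult_def msum_def)

lemma expo_add_comm: "expo_add a b = expo_add b a"
  by (simp add: expo_add_def add.commute)

lemma msum_comm_sub: "msum A B \<subseteq> msum B A"
  unfolding msum_def using expo_add_comm by blast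

lemma msum_comm: "msum A B = msum B A"
  using msum_comm_sub by blast

lemma vb_mult_comm: "vb_mult a b = vb_mult b a"
  by (simp add: vb_mult_msum msum_comm)

lemma emb_msum: "emb ` msum A B = emb ` A + emb ` B"
  by (force simp: msum_def set_plus_def emb_add)

lemma newton_msum: "newton (msum A B) = newton A + newton B"
proof
  show "newton (msum A B) \<subseteq> newton A + newton B"
  proof (rule newton_least)
    show "convex (newton A + newton B)" by (intro convex_set_plus convex_newton)
    show "x + w \<in> newton A + newton B" if xN: "x \<in> newton A + newton B" and wN: "w \<in> orthant" for x w
    proof -
      obtain p q where "x = p + q" "p \<in> newton A" "q \<in> newton B" using xN by (rule set_plus_elim)
      then have "x + w = (p + w) + q" "p + w \<in> newton A" using wN
        by (auto simp: algebra_simps intro: newton_plus_orthant)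
      then show ?thesis using \<open>q \<in> newton B\<close> by (metis set_plus_intro)
    qed
    show "emb ` msum A B \<subseteq> newton A + newton B"
      unfolding emb_msum by (intro set_plus_mono2) (auto intro: emb_in_newton)
  qed
  show "newton A + newton B \<subseteq> newton (msum A B)"
  proof
    fix z assume "z \<in> newton A + newton B"
    then obtain c1 w1 c2 w2 where z: "z = (c1 + w1) + (c2 + w2)" "c1 \<in> convex hull (emb ` A)"
      "c2 \<in> convex hull (emb ` B)" "w1 \<in> orthant" "w2 \<in> orthant"
      by (auto simp: set_plus_def newton_def)
    have "c1 + c2 \<in> convex hull (emb ` msum A B)"
      unfolding emb_msum convex_hull_set_plus using z by auto
    moreover have "z = (c1 + c2) + (w1 + w2)" using z by (simp add: algebra_simps)
    moreover have "w1 + w2 \<in> orthant" using z by (intro orthant_add)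
    ultimately show "z \<in> newton (msum A B)" unfolding newton_def by blast
  qed
qed

lemma newton_vb_mult: "newton (vb_mult a b) = newton a + newton b"
  by (simp add: vb_mult_msum newton_vert newton_msum)

lemma newton_vb_add: "newton (vb_add a b) = newton (a \<union> b)"
  by (simp add: vb_add_def newton_vert)

lemma newton_Un_sub:
  assumes "newton A \<subseteq> newton C" "newton B \<subseteq> newton C"
  shows "newton (A \<union> B) \<subseteq> newton C"
proof (rule newton_subI)
  fix a assume "a \<in> A \<union> B"
  then show "emb a \<in> newton C"
  proof
    assume "a \<in> A" then have "emb a \<in> newton A" by (rule emb_in_newton)
    then show ?thesis using assms(1) by blast
  next
    assume "a \<in> B" then have "emb a \<in> newton B" by (rule emb_in_newton)
    then show ?thesis using assms(2) by blast
  qed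
qed

lemma newton_Un_cong:
  assumes "newton A = newton A'" "newton B = newton B'"
  shows "newton (A \<union> B) = newton (A' \<union> B')"
proof
  have "newton A' \<subseteq> newton (A' \<union> B')" "newton B' \<subseteq> newton (A' \<union> B')"
    by (rule newton_mono, blast)+
  then show "newton (A \<union> B) \<subseteq> newton (A' \<union> B')"
    using assms by (intro newton_Un_sub) auto
  have "newton A \<subseteq> newton (A \<union> B)" "newton B \<subseteq> newton (A \<union> B)"
    by (rule newton_mono, blast)+
  then show "newton (A' \<union> B') \<subseteq> newton (A \<union> B)"
    using assms by (intro newton_Un_sub) auto
qed

lemma newton_Un_vert: "newton (vert A \<union> vert B) = newton (A \<union> B)"
  by (intro newton_Un_cong newton_vert)

lemma newton_Un_absorb:
  assumes "newton A \<subseteq> newton B"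
  shows "newton (A \<union> B) = newton B"
proof
  show "newton (A \<union> B) \<subseteq> newton B"
    using assms by (intro newton_Un_sub) auto
  show "newton B \<subseteq> newton (A \<union> B)" by (rule newton_mono) auto
qed



lemma finite_below: "finite {p :: ('m::finite) expo. \<forall>i. p i \<le> e i}"
proof -
  have "{p :: 'm expo. \<forall>i. p i \<le> e i} \<subseteq> PiE UNIV (\<lambda>i. {..e i})"
    by (auto simp: PiE_iff)
  moreover have "finite (PiE (UNIV :: 'm set) (\<lambda>i. {..e i}))" by (intro finite_PiE) auto
  ultimately show ?thesis by (rule finite_subset)
qed

lemma supp_add: "supp (mps_add f g) \<subseteq> supp f \<union> supp g"
  by (auto simp: supp_def mps_add_def)

lemma supp_mult: "supp (mps_mult f g) \<subseteq> msum (supp f) (supp g)"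
proof
  fix e assume "e \<in> supp (mps_mult f g)"
  then have "(\<Sum>p\<in>{p. \<forall>i. p i \<le> e i}. f p * g (\<lambda>i. e i - p i)) \<noteq> 0"
    by (simp add: supp_def mps_mult_def)
  then obtain p where p: "\<forall>i. p i \<le> e i" "f p * g (\<lambda>i. e i - p i) \<noteq> 0"
    by (rule sum.not_neutral_contains_not_neutral) auto
  then have "e = expo_add p (\<lambda>i. e i - p i)" by (simp add: expo_add_def fun_eq_iff)
  moreover have "p \<in> supp f" "(\<lambda>i. e i - p i) \<in> supp g" using p(2) by (auto simp: supp_def)
  ultimately show "e \<in> msum (supp f) (supp g)" unfolding msum_def by blast
qed

lemma msum_unique:
  assumes v: "v \<in> vert (msum S T)" and a: "a \<in> S" "b \<in> T" "v = expo_add a b"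
    and a': "a' \<in> S" "b' \<in> T" "v = expo_add a' b'"
  shows "a' = a \<and> b' = b"
proof -
  have e: "emb v extreme_point_of newton (msum S T)" using v by (simp add: vert_def)
  have p1: "emb (expo_add a b') \<in> newton (msum S T)" using a a' by (intro emb_in_newton) (auto simp: msum_def)
  have p2: "emb (expo_add a' b) \<in> newton (msum S T)" using a a' by (intro emb_in_newton) (auto simp: msum_def)
  have hn: "\<And>i. a i + b i = a' i + b' i" using a(3) a'(3) by (simp add: expo_add_def fun_eq_iff)
  have hr: "\<And>i. real (a i) + real (b i) = real (a' i) + real (b' i)" using hn by (metis of_nat_add)
  have "emb v = (1/2) *\<^sub>R (emb (expo_add a b') + emb (expo_add a' b))"
  proof (subst vec_eq_iff, intro allI)
    fix i
    have "real (v i) = real (a i) + real (b i)" using a(3) by (simp add: expo_add_def)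
    then show "emb v $ i = ((1/2) *\<^sub>R (emb (expo_add a b') + emb (expo_add a' b))) $ i"
      using hr[of i] by (simp add: emb_def expo_add_def field_simps)
  qed
  then have "emb (expo_add a b') = emb (expo_add a' b)" using extreme_mid[OF e p1 p2] by blast
  then have h2: "\<And>i. a i + b' i = a' i + b i" by (simp add: expo_add_def fun_eq_iff)
  have "b' i = b i \<and> a' i = a i" for i using h2[of i] hn[of i] by arith
  then show ?thesis by (simp add: fun_eq_iff)
qed

lemma vert_msum_in_supp:
  fixes f g :: "('a::field, 'm::finite) mps"
  assumes v: "v \<in> vert (msum (supp f) (supp g))"
  shows "v \<in> supp (mps_mult f g)"
proof -
  have "v \<in> msum (supp f) (supp g)" using v vert_subset by blast
  then obtain a b where ab: "a \<in> supp f" "b \<in> supp g" "v = expo_add a b"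
    by (auto simp: msum_def)
  let ?P = "{p. \<forall>i. p i \<le> v i}"
  have aP: "a \<in> ?P" using ab(3) by (simp add: expo_add_def)
  have bv: "(\<lambda>i. v i - a i) = b" using ab(3) by (simp add: expo_add_def fun_eq_iff)
  have z: "f p * g (\<lambda>i. v i - p i) = 0" if "p \<in> ?P - {a}" for p
  proof (rule ccontr)
    assume ne: "f p * g (\<lambda>i. v i - p i) \<noteq> 0"
    then have "p \<in> supp f" "(\<lambda>i. v i - p i) \<in> supp g" by (auto simp: supp_def)
    moreover have "v = expo_add p (\<lambda>i. v i - p i)" using that by (simp add: expo_add_def fun_eq_iff)
    ultimately have "p = a" using msum_unique[OF v ab] by blast
    then show False using that by simp
  qed
  have s0: "(\<Sum>p\<in>?P - {a}. f p * g (\<lambda>i. v i - p i)) = 0"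
    by (rule sum.neutral) (use z in blast)
  have "mps_mult f g v = f a * g (\<lambda>i. v i - a i) + (\<Sum>p\<in>?P - {a}. f p * g (\<lambda>i. v i - p i))"
    unfolding mps_mult_def by (rule sum.remove[OF finite_below aP])
  then have "mps_mult f g v = f a * g b" using s0 bv by simp
  then show ?thesis using ab by (simp add: supp_def)
qed

lemma trop_mult: "trop_series (mps_mult f g) = vb_mult (trop_series f) (trop_series (g :: ('a::field, 'm::finite) mps))"
proof -
  have "newton (supp (mps_mult f g)) = newton (msum (supp f) (supp g))"
  proof
    show "newton (supp (mps_mult f g)) \<subseteq> newton (msum (supp f) (supp g))"
      by (intro newton_mono supp_mult)
    have "newton (msum (supp f) (supp g)) = newton (vert (msum (supp f) (supp g)))"
      by (simp add: newton_vert)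
    also have "\<dots> \<subseteq> newton (supp (mps_mult f g))"
      using vert_msum_in_supp[of _ f g] by (intro newton_mono) auto
    finally show "newton (msum (supp f) (supp g)) \<subseteq> newton (supp (mps_mult f g))" .
  qed
  then show ?thesis
    unfolding trop_series_def vb_mult_msum vert_eq_iff newton_msum newton_vert .
qed

lemma mps_mult_below_delta:
  fixes f :: "('a::field, 'm::finite) mps"
  shows "mps_mult (mps_const c) f = (\<lambda>e. c * f e)"
proof
  fix e
  have "mps_mult (mps_const c) f e = (\<Sum>p\<in>{p. \<forall>i. p i \<le> e i}. if p = expo_zero then c * f e else 0)"
    unfolding mps_mult_def mps_const_def by (intro sum.cong) (auto simp: expo_zero_def)
  also have "\<dots> = c * f e" using finite_below[of e] by (simp add: expo_zero_def)
  finally show "mps_mult (mps_const c) f e = c * f e" .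
qed

lemma mps_mult_one: "mps_mult mps_one f = (f :: ('a::field, 'm::finite) mps)"
  by (simp add: mps_one_def mps_mult_below_delta)

lemma mps_mult_smult: "mps_mult (\<lambda>e. c * g e) h = (\<lambda>e. c * mps_mult g h e)"
  by (simp add: mps_mult_def sum_distrib_left mult.assoc)

lemma supp_const: "c \<noteq> 0 \<Longrightarrow> supp (mps_const c) = {expo_zero}"
  by (auto simp: supp_def mps_const_def)

lemma trop_const: "c \<noteq> 0 \<Longrightarrow> trop_series (mps_const c) = {expo_zero}"
  by (simp add: trop_series_def supp_const)

lemma trop_one: "trop_series mps_one = {expo_zero}"
  by (simp add: mps_one_def trop_const)

lemma msum_zero: "msum A {expo_zero} = A"
  by (auto simp: msum_def expo_add_def expo_zero_def)

lemma msum_empty: "msum A {} = {}"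
  by (auto simp: msum_def)

lemma vf_eq_refl: "vf_eq p p"
  by (simp add: vf_eq_def vb_mult_comm)



lemma part1:
  fixes q :: "('a::field, 'm::finite) mps \<times> ('a, 'm) mps"
  assumes "q \<in> Kfrac" shows "trop q \<in> VBfrac"
proof -
  obtain f g where q: "q = (f, g)" "g \<noteq> (\<lambda>_. 0)" using assms by (auto simp: Kfrac_def)
  then obtain e where "g e \<noteq> 0" by auto
  then have "supp g \<noteq> {}" by (auto simp: supp_def)
  then have "vert (supp g) \<noteq> {}" by (rule vert_ne)
  then show ?thesis using q by (simp add: trop_def trop_series_def VBfrac_def VBt_def vert_vert)
qed

definition ind :: "'m expo set \<Rightarrow> ('a::field, 'm) mps" where
  "ind X = (\<lambda>e. if e \<in> X then 1 else 0)"

lemma supp_ind: "supp (ind X :: ('a::field, 'm) mps) = X"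
  by (simp add: supp_def ind_def)

lemma part2:
  assumes "z \<in> (VBfrac :: ('m::finite expo set \<times> 'm expo set) set)"
  shows "\<exists>q \<in> (Kfrac :: (('a::field, 'm) mps \<times> ('a, 'm) mps) set). vf_eq (trop q) z"
proof -
  obtain a b where z: "z = (a, b)" "vert a = a" "vert b = b" "b \<noteq> {}"
    using assms by (auto simp: VBfrac_def VBt_def)
  then obtain e where "e \<in> b" by auto
  then have "(ind b :: ('a, 'm) mps) e \<noteq> 0" by (simp add: ind_def)
  then have "(ind b :: ('a, 'm) mps) \<noteq> (\<lambda>_. 0)" by auto
  then have "(ind a :: ('a, 'm) mps, ind b) \<in> Kfrac" by (simp add: Kfrac_def)
  moreover have "trop (ind a :: ('a, 'm) mps, ind b :: ('a, 'm) mps) = z"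
    using z by (simp add: trop_def trop_series_def supp_ind)
  ultimately show ?thesis using vf_eq_refl by metis
qed

lemma part3:
  fixes p q :: "('a::field, 'm::finite) mps \<times> ('a, 'm) mps"
  shows "vf_eq (trop (fr_mult p q)) (vf_mult (trop p) (trop q))"
  by (simp add: fr_mult_def trop_def vf_mult_def trop_mult vf_eq_refl)

lemma part4:
  fixes p q :: "('a::field, 'm::finite) mps \<times> ('a, 'm) mps"
  shows "vf_le (trop (fr_add p q)) (vf_add (trop p) (trop q))"
proof -
  obtain f1 g1 where p: "p = (f1, g1)" by fastforce
  obtain f2 g2 where q: "q = (f2, g2)" by fastforce
  define h1 where "h1 = mps_mult f1 g2"
  define h2 where "h2 = mps_mult f2 g1"
  define X where "X = trop_series (mps_add h1 h2)"
  define E where "E = vb_mult (trop_series g1) (trop_series g2)"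
  define Y where "Y = vb_add (vb_mult (trop_series f1) (trop_series g2)) (vb_mult (trop_series g1) (trop_series f2))"
  have D: "trop_series (mps_mult g1 g2) = E" by (simp add: E_def trop_mult)
  have Y: "Y = vb_add (trop_series h1) (trop_series h2)"
    by (simp add: Y_def h1_def h2_def trop_mult vb_mult_comm)
  have NX: "newton X \<subseteq> newton Y"
  proof -
    have "newton X = newton (supp (mps_add h1 h2))" by (simp add: X_def trop_series_def newton_vert)
    also have "\<dots> \<subseteq> newton (supp h1 \<union> supp h2)" by (intro newton_mono supp_add)
    also have "\<dots> = newton Y" by (simp add: Y newton_vb_add trop_series_def newton_Un_vert)
    finally show ?thesis .
  qed
  have "newton (vb_mult X E) \<subseteq> newton (vb_mult E Y)"
    unfolding newton_vb_mult using NX by (simp add: add.commute set_plus_mono2)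
  then have U: "newton (vb_mult X E \<union> vb_mult E Y) = newton (vb_mult E Y)"
    by (rule newton_Un_absorb)
  have "vb_mult (vb_add (vb_mult X E) (vb_mult E Y)) E = vb_mult (vb_mult E E) Y"
    unfolding vb_mult_msum[of "vb_add _ _"] vb_mult_msum[of "vb_mult E E"] vert_eq_iff newton_msum
    unfolding newton_vb_add U newton_vb_mult by (simp add: ac_simps)
  then show ?thesis
    by (simp add: p q vf_le_def vf_add_def vf_eq_def trop_def fr_add_def D
        flip: X_def E_def Y_def h1_def h2_def)
qed

lemma part5:
  fixes q :: "('a::field, 'm::finite) mps \<times> ('a, 'm) mps"
  shows "vf_eq (trop q) vf_zero \<longleftrightarrow> fst q = (\<lambda>_. 0)"
proof -
  obtain f g where q: "q = (f, g)" by fastforce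
  have "vf_eq (trop q) vf_zero \<longleftrightarrow> vert (supp f) = {}"
    by (simp add: q vf_eq_def vf_zero_def trop_def vb_mult_msum msum_zero msum_empty
        trop_series_def vert_vert)
  also have "\<dots> \<longleftrightarrow> supp f = {}" using vert_ne[of "supp f"] by auto
  also have "\<dots> \<longleftrightarrow> f = (\<lambda>_. 0)" by (auto simp: supp_def)
  finally show ?thesis by (simp add: q)
qed

lemma part6:
  assumes "(c :: 'a::field) \<noteq> 0"
  shows "vf_eq (trop (mps_const c :: ('a, 'm::finite) mps, mps_one :: ('a, 'm) mps)) vf_one"
  using assms by (simp add: trop_def trop_const trop_one vf_one_def vf_eq_refl)



lemma generic_sum:
  fixes u w :: "('a::field_char_0, 'm::finite) mps"
  shows "\<exists>c. c \<noteq> 0 \<and> trop_series (mps_add u (\<lambda>e. c * w e)) = vb_add (trop_series u) (trop_series w)"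
proof -
  define V where "V = vert (supp u \<union> supp w)"
  have fV: "finite V" by (simp add: V_def vert_finite)
  define Bad where "Bad = insert 0 ((\<lambda>v. - u v / w v) ` V)"
  have "finite Bad" using fV by (simp add: Bad_def)
  then obtain c where c: "c \<notin> Bad" using ex_new_if_finite[OF infinite_UNIV_char_0] by blast
  then have c0: "c \<noteq> 0" by (simp add: Bad_def)
  let ?s = "mps_add u (\<lambda>e. c * w e)"
  have VS: "V \<subseteq> supp ?s"
  proof
    fix v assume v: "v \<in> V"
    then have "v \<in> supp u \<union> supp w" unfolding V_def using vert_subset by blast
    show "v \<in> supp ?s"
    proof (cases "w v = 0")
      case True
      then show ?thesis using \<open>v \<in> supp u \<union> supp w\<close> by (simp add: supp_def mps_add_def)
    next
      case False
      show ?thesis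
      proof (rule ccontr)
        assume "v \<notin> supp ?s"
        then have "u v + c * w v = 0" by (simp add: supp_def mps_add_def)
        then have "c = - u v / w v" using False by (simp add: field_simps add_eq_0_iff)
        then show False using c v by (simp add: Bad_def)
      qed
    qed
  qed
  have "newton (supp ?s) = newton (supp u \<union> supp w)"
  proof
    show "newton (supp ?s) \<subseteq> newton (supp u \<union> supp w)"
      by (intro newton_mono) (auto simp: supp_def mps_add_def)
    have "newton (supp u \<union> supp w) = newton V" by (simp add: V_def newton_vert)
    also have "\<dots> \<subseteq> newton (supp ?s)" using VS by (rule newton_mono)
    finally show "newton (supp u \<union> supp w) \<subseteq> newton (supp ?s)" .
  qed
  then have "trop_series ?s = vb_add (trop_series u) (trop_series w)"
    unfolding trop_series_def vb_add_def vert_eq_iff newton_vert newton_Un_vert .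
  then show ?thesis using c0 by blast
qed

lemma vf_le_one: "vf_le ({expo_zero}, {expo_zero}) vf_one"
  by (simp add: vf_le_def vf_add_def vb_mult_msum msum_zero vb_add_def vf_one_def vf_eq_refl)

lemma part7:
  fixes a b :: "('a::field_char_0, 'm::finite) mps \<times> ('a, 'm) mps"
  shows "\<exists>x \<in> Kfrac. \<exists>y \<in> Kfrac.
          vf_le (trop x) vf_one \<and> vf_le (trop y) vf_one \<and>
          vf_eq (trop (fr_add (fr_mult x a) (fr_mult y b))) (vf_add (trop a) (trop b))"
proof -
  obtain a1 a2 where a: "a = (a1, a2)" by fastforce
  obtain b1 b2 where b: "b = (b1, b2)" by fastforce
  define u where "u = mps_mult a1 b2"
  define w where "w = mps_mult b1 a2"
  obtain c where c: "c \<noteq> 0" "trop_series (mps_add u (\<lambda>e. c * w e)) = vb_add (trop_series u) (trop_series w)"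
    using generic_sum by blast
  have one: "(mps_one :: ('a, 'm) mps) \<noteq> (\<lambda>_. 0)"
  proof -
    have "(mps_one :: ('a, 'm) mps) expo_zero = 1" by (simp add: mps_one_def mps_const_def)
    then show ?thesis by (metis one_neq_zero)
  qed
  let ?x = "(mps_one :: ('a, 'm) mps, mps_one :: ('a, 'm) mps)"
  let ?y = "(mps_const c :: ('a, 'm) mps, mps_one :: ('a, 'm) mps)"
  have K: "?x \<in> Kfrac" "?y \<in> Kfrac" using one by (auto simp: Kfrac_def)
  have T: "trop ?x = ({expo_zero}, {expo_zero})" "trop ?y = ({expo_zero}, {expo_zero})"
    using c(1) by (simp_all add: trop_def trop_one trop_const)
  have F: "fr_add (fr_mult ?x a) (fr_mult ?y b) = (mps_add u (\<lambda>e. c * w e), mps_mult a2 b2)"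
    by (simp add: a b fr_add_def fr_mult_def mps_mult_one mps_mult_below_delta mps_mult_smult u_def w_def)
  have "vf_eq (trop (fr_add (fr_mult ?x a) (fr_mult ?y b))) (vf_add (trop a) (trop b))"
    unfolding F using c(2)
    by (simp add: a b trop_def vf_add_def trop_mult u_def w_def vb_mult_comm vf_eq_refl)
  then show ?thesis using K T vf_le_one by metis
qed


theorem proposition2p19:
  shows
    "(\<forall>q \<in> (Kfrac :: (('a::field_char_0, 'm::finite) mps \<times> ('a, 'm) mps) set). trop q \<in> VBfrac)
   \<and> (\<forall>z \<in> (VBfrac :: ('m expo set \<times> 'm expo set) set).
        \<exists>q \<in> (Kfrac :: (('a, 'm) mps \<times> ('a, 'm) mps) set). vf_eq (trop q) z)
   \<and> (\<forall>p \<in> (Kfrac :: (('a, 'm) mps \<times> ('a, 'm) mps) set). \<forall>q \<in> Kfrac.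
        vf_eq (trop (fr_mult p q)) (vf_mult (trop p) (trop q)))
   \<and> (\<forall>p \<in> (Kfrac :: (('a, 'm) mps \<times> ('a, 'm) mps) set). \<forall>q \<in> Kfrac.
        vf_le (trop (fr_add p q)) (vf_add (trop p) (trop q)))
   \<and> (\<forall>q \<in> (Kfrac :: (('a, 'm) mps \<times> ('a, 'm) mps) set).
        vf_eq (trop q) vf_zero \<longleftrightarrow> fst q = (\<lambda>_. 0))
   \<and> (\<forall>c :: 'a. c \<noteq> 0 \<longrightarrow>
        vf_eq (trop (mps_const c :: ('a, 'm) mps, mps_one :: ('a, 'm) mps)) vf_one)
   \<and> (\<forall>a \<in> (Kfrac :: (('a, 'm) mps \<times> ('a, 'm) mps) set). \<forall>b \<in> Kfrac.
        \<exists>x \<in> Kfrac. \<exists>y \<in> Kfrac.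
          vf_le (trop x) vf_one \<and> vf_le (trop y) vf_one \<and>
          vf_eq (trop (fr_add (fr_mult x a) (fr_mult y b))) (vf_add (trop a) (trop b)))"
  apply (intro conjI)
        apply (blast intro: part1)
       apply (blast intro: part2)
      apply (blast intro: part3)
     apply (blast intro: part4)
    apply (simp add: part5)
   apply (simp add: part6)
  apply (intro ballI)
  apply (rule part7)
  done

end
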